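(* Let $\{\epsilon_i\}_{i\in\mathbb{Z}}$ be an i.i.d. sequence of standard normal random variables $\epsilon_i\sim\mathcal{N}(0,1)$, and let $\{En_i\}_{i\in\mathbb{Z}}$ be a sequence of real random variables such that: (A1) $\{En_i\}_{i\in\mathbb{Z}}$ is stationary and ergodic; (A2) $\{En_i\}_{i\in\mathbb{Z}}$ is independent of $\{\epsilon_i\}_{i\in\mathbb{Z}}$; (A3) $\mathbb{E}[\log^{+}|En_i|]<\infty$, where $\log^{+}x=\max\{\log x,0\}$. Then the cloud-model recurrence $$X_{n+1}=\epsilon_{n+1}\,|X_n|+En_{n+1},\qquad n\in\mathbb{Z},$$ admits a unique stationary solution $\{X_n\}_{n\in\mathbb{Z}}$.
   Context: Background: a $p$-order (Gaussian) cloud model with numerical characteristics $En_1,\dots,En_p,He$ ($He>0$) generates a cloud drop via $x_1=En_p+He\cdot\epsilon$, $x_i=En_{p-(i-1)}+|x_{i-1}|\cdot\epsilon$ for $2\le i\le p$, with fresh standard normal $\epsilon$ at each step. Viewing the numerical characteristics as a sequence $\{En_i\}$ and the Gaussian noises as a sequence $\{\epsilon_i\}$, this is the stochastic recurrence $X_{n+1}=\epsilon_{n+1}|X_n|+En_{n+1}$ (the characteristics play the role of the additive terms). A stationary solution is a sequence of real random variables $\{X_n\}_{n\in\mathbb{Z}}$ satisfying the recurrence almost surely for all $n$, whose finite-dimensional distributions are shift-invariant; uniqueness is almost sure. *)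

theory Defs
  imports "HOL-Probability.Probability"
begin

definition log_plus :: "real \<Rightarrow> real" where
  "log_plus x = (if x > 0 then max (ln x) 0 else 0)"

definition stationary_process :: "'a measure \<Rightarrow> (int \<Rightarrow> 'a \<Rightarrow> real) \<Rightarrow> bool" where
  "stationary_process M X \<longleftrightarrow>
     (\<forall>J k. finite J \<longrightarrow>
        distr M (PiM J (\<lambda>_. borel)) (\<lambda>\<omega>. restrict (\<lambda>j. X (j + k) \<omega>) J)
      = distr M (PiM J (\<lambda>_. borel)) (\<lambda>\<omega>. restrict (\<lambda>j. X j \<omega>) J))"

definition ergodic_process :: "'a measure \<Rightarrow> (int \<Rightarrow> 'a \<Rightarrow> real) \<Rightarrow> bool" where
  "ergodic_process M X \<longleftrightarrow>
     (\<forall>A \<in> sets (PiM (UNIV :: int set) (\<lambda>_. borel)).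
        (\<lambda>x i. x (i + 1)) -` A = A \<longrightarrow>
        measure M {\<omega> \<in> space M. (\<lambda>i. X i \<omega>) \<in> A} \<in> {0, 1})"

end

theory Submission
  imports Defs
begin


type_synonym path = "(int \<Rightarrow> real) \<times> (int \<Rightarrow> real)"

abbreviation SP :: "(int \<Rightarrow> real) measure" where
  "SP \<equiv> PiM (UNIV :: int set) (\<lambda>_. (borel :: real measure))"

abbreviation OP :: "path measure" where
  "OP \<equiv> SP \<Otimes>\<^sub>M SP"

definition shp :: "int \<Rightarrow> path \<Rightarrow> path" where
  "shp k p = ((\<lambda>i. fst p (i + k)), (\<lambda>i. snd p (i + k)))"

fun Xm :: "nat \<Rightarrow> path \<Rightarrow> real" where
  "Xm 0 p = 0"
| "Xm (Suc m) p = snd p 0 * \<bar>Xm m (shp (-1) p)\<bar> + fst p 0"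

definition Fl :: "path \<Rightarrow> real" where
  "Fl p = lim (\<lambda>m. Xm m p)"

lemma shift_meas: "(\<lambda>f i. f (i + k)) \<in> measurable SP SP"
  by (rule measurable_PiM_single') auto

lemma shp_meas[measurable]: "shp k \<in> measurable OP OP"
  unfolding shp_def
proof (rule measurable_Pair)
  have "(\<lambda>p. (\<lambda>f i. f (i + k)) (fst p)) \<in> measurable OP SP"
    using shift_meas by measurable
  then show "(\<lambda>p. \<lambda>i. fst p (i + k)) \<in> measurable OP SP" by simp
  have "(\<lambda>p. (\<lambda>f i. f (i + k)) (snd p)) \<in> measurable OP SP"
    using shift_meas by measurable
  then show "(\<lambda>p. \<lambda>i. snd p (i + k)) \<in> measurable OP SP" by simp
qed

lemma shp_shp: "shp a (shp b p) = shp (a + b) p"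
  by (simp add: shp_def ac_simps)

lemma shp_0: "shp 0 p = p"
  by (simp add: shp_def)

lemma Xm_meas[measurable]: "Xm m \<in> borel_measurable OP"
proof (induction m)
  case 0 then show ?case by simp
next
  case (Suc m)
  have a: "(\<lambda>p. Xm m (shp (-1) p)) \<in> borel_measurable OP"
    using Suc measurable_compose[OF shp_meas] by blast
  have b: "(\<lambda>p. snd p 0) \<in> borel_measurable OP" by measurable
  have c: "(\<lambda>p. fst p 0) \<in> borel_measurable OP" by measurable
  show ?case using a b c by simp
qed

lemma Fl_meas[measurable]: "Fl \<in> borel_measurable OP"
  unfolding Fl_def by measurable

lemma Xm_diff: "\<bar>Xm (Suc m) p - Xm m p\<bar> \<le> (\<Prod>k<m. \<bar>snd p (- int k)\<bar>) * \<bar>fst p (- int m)\<bar>"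
proof (induction m arbitrary: p)
  case 0 then show ?case by simp
next
  case (Suc m)
  have "\<bar>Xm (Suc (Suc m)) p - Xm (Suc m) p\<bar> = \<bar>snd p 0\<bar> * \<bar>\<bar>Xm (Suc m) (shp (-1) p)\<bar> - \<bar>Xm m (shp (-1) p)\<bar>\<bar>"
    by (simp add: abs_mult[symmetric] algebra_simps)
  also have "\<dots> \<le> \<bar>snd p 0\<bar> * \<bar>Xm (Suc m) (shp (-1) p) - Xm m (shp (-1) p)\<bar>"
    by (intro mult_left_mono) auto
  also have "\<dots> \<le> \<bar>snd p 0\<bar> * ((\<Prod>k<m. \<bar>snd (shp (-1) p) (- int k)\<bar>) * \<bar>fst (shp (-1) p) (- int m)\<bar>)"
    by (intro mult_left_mono Suc.IH) auto
  also have "\<dots> = (\<Prod>k<Suc m. \<bar>snd p (- int k)\<bar>) * \<bar>fst p (- int (Suc m))\<bar>"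
    by (simp add: shp_def prod.lessThan_Suc_shift del: prod.lessThan_Suc)
       (simp add: algebra_simps minus_diff_commute)
  finally show ?case .
qed

lemma Xm_conv:
  assumes "summable (\<lambda>m. (\<Prod>k<m. \<bar>snd p (- int k)\<bar>) * \<bar>fst p (- int m)\<bar>)"
  shows "convergent (\<lambda>m. Xm m p)"
proof -
  have "summable (\<lambda>m. Xm (Suc m) p - Xm m p)"
    by (rule summable_comparison_test'[OF assms, of 0]) (simp only: real_norm_def Xm_diff)
  then have "convergent (\<lambda>n. \<Sum>m<n. Xm (Suc m) p - Xm m p)"
    using summable_iff_convergent by blast
  moreover have "(\<Sum>m<n. Xm (Suc m) p - Xm m p) = Xm n p" for n
    by (induction n) auto
  ultimately show ?thesis by simp
qed

lemma Fl_rec: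
  assumes "convergent (\<lambda>m. Xm m (shp (-1) q))"
  shows "Fl q = snd q 0 * \<bar>Fl (shp (-1) q)\<bar> + fst q 0"
proof -
  from assms have L: "(\<lambda>m. Xm m (shp (-1) q)) \<longlonglongrightarrow> Fl (shp (-1) q)"
    unfolding Fl_def by (simp add: convergent_LIMSEQ_iff)
  have "(\<lambda>m. Xm (Suc m) q) \<longlonglongrightarrow> snd q 0 * \<bar>Fl (shp (-1) q)\<bar> + fst q 0"
    by (simp only: Xm.simps) (intro tendsto_intros L)
  then have "(\<lambda>m. Xm m q) \<longlonglongrightarrow> snd q 0 * \<bar>Fl (shp (-1) q)\<bar> + fst q 0"
    by (rule LIMSEQ_imp_Suc)
  then show ?thesis unfolding Fl_def by (rule limI)
qed




lemma path_meas:
  assumes "\<And>i. W i \<in> borel_measurable M"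
  shows "(\<lambda>\<omega> i. W i \<omega>) \<in> measurable M SP"
  by (rule measurable_PiM_single') (auto simp: assms)

lemma (in prob_space) path_shift_eq:
  fixes W :: "int \<Rightarrow> 'a \<Rightarrow> real"
  assumes meas: "\<And>i. W i \<in> borel_measurable M"
  and eq: "\<And>J A. finite J \<Longrightarrow> (\<And>j. j\<in>J \<Longrightarrow> A j \<in> sets borel) \<Longrightarrow>
     emeasure M {\<omega>\<in>space M. \<forall>j\<in>J. W (j+k) \<omega> \<in> A j} = emeasure M {\<omega>\<in>space M. \<forall>j\<in>J. W j \<omega> \<in> A j}"
  shows "distr M SP (\<lambda>\<omega> i. W (i+k) \<omega>) = distr M SP (\<lambda>\<omega> i. W i \<omega>)"
proof (rule measure_eqI_PiM_infinite)
  have m1: "(\<lambda>\<omega> i. W (i+k) \<omega>) \<in> measurable M SP" by (rule path_meas) (simp add: meas)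
  have m2: "(\<lambda>\<omega> i. W i \<omega>) \<in> measurable M SP" by (rule path_meas) (simp add: meas)
  show "finite_measure (distr M SP (\<lambda>\<omega> i. W (i+k) \<omega>))"
    using prob_space_distr[OF m1] by (simp add: prob_space_def)
  fix A and J :: "int set" assume J: "finite J" "J \<subseteq> UNIV" and A: "\<And>i. i \<in> J \<Longrightarrow> A i \<in> sets (borel :: real measure)"
  have s1: "(\<lambda>\<omega> i. W (i+k) \<omega>) -` prod_emb UNIV (\<lambda>_. borel) J (Pi\<^sub>E J A) \<inter> space M
      = {\<omega>\<in>space M. \<forall>j\<in>J. W (j+k) \<omega> \<in> A j}"
    by (auto simp: prod_emb_def PiE_iff)
  have s2: "(\<lambda>\<omega> i. W i \<omega>) -` prod_emb UNIV (\<lambda>_. borel) J (Pi\<^sub>E J A) \<inter> space M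
      = {\<omega>\<in>space M. \<forall>j\<in>J. W j \<omega> \<in> A j}"
    by (auto simp: prod_emb_def PiE_iff)
  have pe: "prod_emb UNIV (\<lambda>_. borel) J (Pi\<^sub>E J A) \<in> sets SP"
    using J A by (intro sets_PiM_I) auto
  show "emeasure (distr M SP (\<lambda>\<omega> i. W (i+k) \<omega>)) (prod_emb UNIV (\<lambda>_. borel) J (Pi\<^sub>E J A)) =
        emeasure (distr M SP (\<lambda>\<omega> i. W i \<omega>)) (prod_emb UNIV (\<lambda>_. borel) J (Pi\<^sub>E J A))"
    using emeasure_distr[OF m1 pe] emeasure_distr[OF m2 pe] s1 s2 eq[OF J(1) A] by simp
qed simp_all

lemma (in prob_space) stat_emeasure:
  fixes W :: "int \<Rightarrow> 'a \<Rightarrow> real"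
  assumes st: "stationary_process M W" and meas: "\<And>i. W i \<in> borel_measurable M"
    and J: "finite J" and A: "\<And>j. j\<in>J \<Longrightarrow> A j \<in> sets borel"
  shows "emeasure M {\<omega>\<in>space M. \<forall>j\<in>J. W (j+k) \<omega> \<in> A j} = emeasure M {\<omega>\<in>space M. \<forall>j\<in>J. W j \<omega> \<in> A j}"
proof -
  have d: "distr M (PiM J (\<lambda>_. borel)) (\<lambda>\<omega>. restrict (\<lambda>j. W (j + k) \<omega>) J)
      = distr M (PiM J (\<lambda>_. borel)) (\<lambda>\<omega>. restrict (\<lambda>j. W j \<omega>) J)"
    using st J unfolding stationary_process_def by blast
  have pe: "Pi\<^sub>E J A \<in> sets (PiM J (\<lambda>_. borel))"
    using J A by (intro sets_PiM_I_finite) auto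
  have m1: "(\<lambda>\<omega>. restrict (\<lambda>j. W (j + k) \<omega>) J) \<in> measurable M (PiM J (\<lambda>_. borel))"
    by (intro measurable_restrict) (simp add: meas)
  have m2: "(\<lambda>\<omega>. restrict (\<lambda>j. W j \<omega>) J) \<in> measurable M (PiM J (\<lambda>_. borel))"
    by (intro measurable_restrict) (simp add: meas)
  have s1: "(\<lambda>\<omega>. restrict (\<lambda>j. W (j + k) \<omega>) J) -` Pi\<^sub>E J A \<inter> space M = {\<omega>\<in>space M. \<forall>j\<in>J. W (j+k) \<omega> \<in> A j}"
    by (auto simp: PiE_iff)
  have s2: "(\<lambda>\<omega>. restrict (\<lambda>j. W j \<omega>) J) -` Pi\<^sub>E J A \<inter> space M = {\<omega>\<in>space M. \<forall>j\<in>J. W j \<omega> \<in> A j}"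
    by (auto simp: PiE_iff)
  show ?thesis
    using emeasure_distr[OF m1 pe] emeasure_distr[OF m2 pe] s1 s2 d by simp
qed

lemma (in prob_space) stat_marg:
  fixes W :: "int \<Rightarrow> 'a \<Rightarrow> real"
  assumes st: "stationary_process M W" and meas: "\<And>i. W i \<in> borel_measurable M"
    and A: "A \<in> sets borel"
  shows "measure M {\<omega>\<in>space M. W k \<omega> \<in> A} = measure M {\<omega>\<in>space M. W j \<omega> \<in> A}"
proof -
  have e: "emeasure M {\<omega>\<in>space M. W k \<omega> \<in> A} = emeasure M {\<omega>\<in>space M. W j \<omega> \<in> A}"
    using stat_emeasure[OF st meas, of "{0}" "\<lambda>_. A" k] stat_emeasure[OF st meas, of "{0}" "\<lambda>_. A" j] A
    by simp
  then show ?thesis by (simp add: measure_def)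
qed

lemma (in prob_space) iid_emeasure:
  fixes eps :: "int \<Rightarrow> 'a \<Rightarrow> real"
  assumes ind: "indep_vars (\<lambda>_. borel) eps UNIV"
    and nd: "\<And>i. distributed M lborel (eps i) (\<lambda>x. ennreal (std_normal_density x))"
    and J: "finite J" and A: "\<And>j. j\<in>J \<Longrightarrow> A j \<in> sets borel"
  shows "emeasure M {\<omega>\<in>space M. \<forall>j\<in>J. eps (j+k) \<omega> \<in> A j} = emeasure M {\<omega>\<in>space M. \<forall>j\<in>J. eps j \<omega> \<in> A j}"
proof (cases "J = {}")
  case True then show ?thesis by simp
next
  case False
  have meas: "eps i \<in> borel_measurable M" for i
    using nd[of i] by (auto dest: distributed_measurable)
  have marg: "prob (eps i -` B \<inter> space M) = prob (eps j -` B \<inter> space M)" if "B \<in> sets borel" for i j B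
  proof -
    have "emeasure M (eps i -` B \<inter> space M) = emeasure (distr M lborel (eps i)) B"
      using that meas by (subst emeasure_distr) auto
    also have "\<dots> = emeasure (density lborel (\<lambda>x. ennreal (std_normal_density x))) B"
      using nd[of i] by (simp add: distributed_distr_eq_density)
    also have "\<dots> = emeasure (distr M lborel (eps j)) B"
      using nd[of j] by (simp add: distributed_distr_eq_density)
    also have "\<dots> = emeasure M (eps j -` B \<inter> space M)"
      using that meas by (subst emeasure_distr) auto
    finally show ?thesis by (simp add: measure_def)
  qed
  have inj: "inj_on (\<lambda>j. j + k) J" by (auto simp: inj_on_def)
  have se: "{\<omega>\<in>space M. \<forall>j\<in>J. eps (j+k) \<omega> \<in> A j} = (\<Inter>i\<in>(\<lambda>j. j+k) ` J. eps i -` A (i - k) \<inter> space M)"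
    using False by auto
  have "prob (\<Inter>i\<in>(\<lambda>j. j+k) ` J. eps i -` A (i - k) \<inter> space M) = (\<Prod>i\<in>(\<lambda>j. j+k) ` J. prob (eps i -` A (i - k) \<inter> space M))"
    using False J A by (intro indep_varsD[OF ind]) auto
  then have "prob {\<omega>\<in>space M. \<forall>j\<in>J. eps (j+k) \<omega> \<in> A j} = (\<Prod>i\<in>(\<lambda>j. j+k) ` J. prob (eps i -` A (i - k) \<inter> space M))"
    by (simp only: se)
  also have "\<dots> = (\<Prod>j\<in>J. prob (eps (j+k) -` A j \<inter> space M))"
    by (subst prod.reindex[OF inj]) simp
  also have "\<dots> = (\<Prod>j\<in>J. prob (eps j -` A j \<inter> space M))"
    using A by (intro prod.cong refl marg) auto
  also have "\<dots> = prob (\<Inter>j\<in>J. eps j -` A j \<inter> space M)"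
    using False J A by (intro indep_varsD[OF ind, symmetric]) auto
  also have "(\<Inter>j\<in>J. eps j -` A j \<inter> space M) = {\<omega>\<in>space M. \<forall>j\<in>J. eps j \<omega> \<in> A j}"
    using False by auto
  finally show ?thesis by (simp add: emeasure_eq_measure)
qed




locale cloud = prob_space M for M :: "'a measure" +
  fixes eps En :: "int \<Rightarrow> 'a \<Rightarrow> real"
  assumes eps_indep: "indep_vars (\<lambda>_. borel) eps UNIV"
    and eps_normal: "\<And>i. distributed M lborel (eps i) (\<lambda>x. ennreal (std_normal_density x))"
    and En_meas[measurable]: "\<And>i. En i \<in> borel_measurable M"
    and A1_stationary: "stationary_process M En"
    and A2: "indep_var (PiM UNIV (\<lambda>_. borel)) (\<lambda>\<omega> i. En i \<omega>) (PiM UNIV (\<lambda>_. borel)) (\<lambda>\<omega> i. eps i \<omega>)"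
    and A3: "\<And>i. (\<integral>\<^sup>+ \<omega>. ennreal (log_plus \<bar>En i \<omega>\<bar>) \<partial>M) < \<infinity>"
begin

lemma eps_meas[measurable]: "eps i \<in> borel_measurable M"
  using eps_normal[of i] by (auto dest: distributed_measurable)

definition Zp :: "'a \<Rightarrow> path" where
  "Zp \<omega> = ((\<lambda>i. En i \<omega>), (\<lambda>i. eps i \<omega>))"

lemma Zp_meas[measurable]: "Zp \<in> measurable M OP"
  unfolding Zp_def by (intro measurable_Pair path_meas) auto

lemma shpZ: "shp k (Zp \<omega>) = ((\<lambda>i. En (i + k) \<omega>), (\<lambda>i. eps (i + k) \<omega>))"
  by (simp add: shp_def Zp_def)

lemma path_stat: "distr M OP (\<lambda>\<omega>. shp k (Zp \<omega>)) = distr M OP Zp"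
proof -
  have dE: "distr M SP (\<lambda>\<omega> i. En (i+k) \<omega>) = distr M SP (\<lambda>\<omega> i. En i \<omega>)"
    by (rule path_shift_eq) (auto intro: stat_emeasure[OF A1_stationary])
  have dP: "distr M SP (\<lambda>\<omega> i. eps (i+k) \<omega>) = distr M SP (\<lambda>\<omega> i. eps i \<omega>)"
    by (rule path_shift_eq) (auto intro: iid_emeasure[OF eps_indep eps_normal])
  have indk: "indep_var SP (\<lambda>\<omega> i. En (i+k) \<omega>) SP (\<lambda>\<omega> i. eps (i+k) \<omega>)"
    using indep_var_compose[OF A2 shift_meas[of k] shift_meas[of k]] by (simp add: comp_def)
  have "distr M OP (\<lambda>\<omega>. shp k (Zp \<omega>)) = distr M OP (\<lambda>\<omega>. ((\<lambda>i. En (i+k) \<omega>), (\<lambda>i. eps (i+k) \<omega>)))"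
    by (simp add: shpZ)
  also have "\<dots> = distr M SP (\<lambda>\<omega> i. En (i+k) \<omega>) \<Otimes>\<^sub>M distr M SP (\<lambda>\<omega> i. eps (i+k) \<omega>)"
    using indk by (simp add: indep_var_distribution_eq)
  also have "\<dots> = distr M SP (\<lambda>\<omega> i. En i \<omega>) \<Otimes>\<^sub>M distr M SP (\<lambda>\<omega> i. eps i \<omega>)"
    by (simp add: dE dP)
  also have "\<dots> = distr M OP Zp"
    using A2 unfolding Zp_def[abs_def] by (simp add: indep_var_distribution_eq)
  finally show ?thesis .
qed

definition Xp :: "int \<Rightarrow> 'a \<Rightarrow> real" where
  "Xp n \<omega> = Fl (shp n (Zp \<omega>))"

lemma Xp_meas[measurable]: "Xp n \<in> borel_measurable M"
  unfolding Xp_def by measurable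

lemma Xp_stat: "stationary_process M Xp"
  unfolding stationary_process_def
proof (intro allI impI)
  fix J :: "int set" and k :: int assume J: "finite J"
  define G where "G q = restrict (\<lambda>j. Fl (shp j q)) J" for q
  have Gm: "G \<in> measurable OP (PiM J (\<lambda>_. borel))"
    unfolding G_def by (intro measurable_restrict) measurable
  have Sm: "(\<lambda>\<omega>. shp k (Zp \<omega>)) \<in> measurable M OP" by measurable
  have "distr M (PiM J (\<lambda>_. borel)) (\<lambda>\<omega>. restrict (\<lambda>j. Xp (j + k) \<omega>) J)
      = distr M (PiM J (\<lambda>_. borel)) (\<lambda>\<omega>. G (shp k (Zp \<omega>)))"
    by (simp add: G_def Xp_def shp_shp)
  also have "\<dots> = distr (distr M OP (\<lambda>\<omega>. shp k (Zp \<omega>))) (PiM J (\<lambda>_. borel)) G"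
    using distr_distr[OF Gm Sm] by (simp add: comp_def)
  also have "\<dots> = distr (distr M OP Zp) (PiM J (\<lambda>_. borel)) G"
    by (simp add: path_stat)
  also have "\<dots> = distr M (PiM J (\<lambda>_. borel)) (\<lambda>\<omega>. G (Zp \<omega>))"
    using distr_distr[OF Gm Zp_meas] by (simp add: comp_def)
  also have "\<dots> = distr M (PiM J (\<lambda>_. borel)) (\<lambda>\<omega>. restrict (\<lambda>j. Xp j \<omega>) J)"
    by (simp add: G_def Xp_def)
  finally show "distr M (PiM J (\<lambda>_. borel)) (\<lambda>\<omega>. restrict (\<lambda>j. Xp (j + k) \<omega>) J)
      = distr M (PiM J (\<lambda>_. borel)) (\<lambda>\<omega>. restrict (\<lambda>j. Xp j \<omega>) J)" .
qed

lemma E_abs: "integrable M (\<lambda>\<omega>. \<bar>eps i \<omega>\<bar>)" "(\<integral>\<omega>. \<bar>eps i \<omega>\<bar> \<partial>M) = sqrt (2/pi)"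
proof -
  have hb: "has_bochner_integral lborel (\<lambda>x. std_normal_density x * \<bar>x\<bar>) (sqrt (2/pi))"
    using std_normal_moment_abs_odd[of 0] by simp
  have "integrable lborel (\<lambda>x. std_normal_density x * \<bar>x\<bar>)"
    using hb unfolding integrable.simps by blast
  then show "integrable M (\<lambda>\<omega>. \<bar>eps i \<omega>\<bar>)"
    using distributed_integrable[OF eps_normal[of i], of abs] by simp
  have "(\<integral>x. std_normal_density x * \<bar>x\<bar> \<partial>lborel) = (\<integral>\<omega>. \<bar>eps i \<omega>\<bar> \<partial>M)"
    by (rule distributed_integral[OF eps_normal[of i]]) auto
  then show "(\<integral>\<omega>. \<bar>eps i \<omega>\<bar> \<partial>M) = sqrt (2/pi)"
    using hb by (simp add: has_bochner_integral_integral_eq)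
qed

lemma E_prod:
  "integrable M (\<lambda>\<omega>. \<Prod>k<m. \<bar>eps (n - int k) \<omega>\<bar>)"
  "(\<integral>\<omega>. (\<Prod>k<m. \<bar>eps (n - int k) \<omega>\<bar>) \<partial>M) = sqrt (2/pi) ^ m"
proof -
  define I where "I = (\<lambda>k. n - int k) ` {..<m}"
  have inj: "inj_on (\<lambda>k. n - int k) {..<m}" by (auto simp: inj_on_def)
  have cI: "card I = m" unfolding I_def using inj by (simp add: card_image)
  have re: "(\<Prod>k<m. \<bar>eps (n - int k) \<omega>\<bar>) = (\<Prod>i\<in>I. \<bar>eps i \<omega>\<bar>)" for \<omega>
    unfolding I_def by (subst prod.reindex[OF inj]) simp
  have ind: "indep_vars (\<lambda>_. borel) (\<lambda>i \<omega>. \<bar>eps i \<omega>\<bar>) I"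
    by (rule indep_vars_compose2[OF indep_vars_subset[OF eps_indep]]) auto
  have fin: "finite I" unfolding I_def by simp
  show "integrable M (\<lambda>\<omega>. \<Prod>k<m. \<bar>eps (n - int k) \<omega>\<bar>)"
    unfolding re using indep_vars_integrable[OF fin ind] E_abs by simp
  have "(\<integral>\<omega>. (\<Prod>i\<in>I. \<bar>eps i \<omega>\<bar>) \<partial>M) = (\<Prod>i\<in>I. \<integral>\<omega>. \<bar>eps i \<omega>\<bar> \<partial>M)"
    using indep_vars_lebesgue_integral[OF fin ind] E_abs by simp
  also have "\<dots> = sqrt (2/pi) ^ m" using E_abs cI by simp
  finally show "(\<integral>\<omega>. (\<Prod>k<m. \<bar>eps (n - int k) \<omega>\<bar>) \<partial>M) = sqrt (2/pi) ^ m"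
    unfolding re .
qed

end



context cloud begin

lemma c_lt: "sqrt (2/pi) < 9/10"
proof -
  have "2/pi < (9/10::real)^2" using pi_gt3 by (simp add: field_simps)
  then have "sqrt (2/pi) < sqrt ((9/10::real)^2)" by (subst real_sqrt_less_iff) simp
  then show ?thesis by simp
qed

lemma BC_eps: "AE \<omega> in M. eventually (\<lambda>m. (\<Prod>k<m. \<bar>eps (n - int k) \<omega>\<bar>) < (9/10)^m) sequentially"
proof -
  define A where "A m = {\<omega>\<in>space M. (9/10::real)^m \<le> (\<Prod>k<m. \<bar>eps (n - int k) \<omega>\<bar>)}" for m
  have Am[measurable]: "A m \<in> sets M" for m unfolding A_def by measurable
  have mA: "measure M (A m) \<le> (sqrt (2/pi) / (9/10))^m" for m
  proof -
    have "measure M (A m) \<le> (\<integral>\<omega>. (\<Prod>k<m. \<bar>eps (n - int k) \<omega>\<bar>) \<partial>M) / (9/10)^m"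
      unfolding A_def
      by (rule integral_Markov_inequality_measure[OF E_prod(1) Am]) (auto simp: prod_nonneg)
    then show ?thesis by (simp add: E_prod(2) power_divide)
  qed
  have "summable (\<lambda>m. (sqrt (2/pi) / (9/10))^m)"
    using c_lt by (intro summable_geometric) simp
  then have "summable (\<lambda>m. measure M (A m))"
    by (rule summable_comparison_test[rotated]) (use mA in simp)
  then have "AE x in M. eventually (\<lambda>m. x \<in> space M - A m) sequentially"
    by (intro borel_cantelli_AE1) (auto simp: emeasure_eq_measure)
  then show ?thesis
    by (rule eventually_mono) (auto elim!: eventually_mono simp: A_def not_le)
qed

lemma sum_ind_bound:
  assumes a: "a > 0" and L: "L \<ge> 0"
  shows "(\<Sum>m. indicator {m. real m * a \<le> L} m :: ennreal) \<le> ennreal (L / a + 1)"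
proof -
  define N where "N = nat \<lfloor>L / a\<rfloor>"
  have out: "indicator {m. real m * a \<le> L} m = (0::ennreal)" if "m \<notin> {..N}" for m
  proof -
    have fl0: "0 \<le> \<lfloor>L / a\<rfloor>" using a L by simp
    have rN: "real N = real_of_int \<lfloor>L / a\<rfloor>" unfolding N_def using fl0 by simp
    have "L / a < real_of_int \<lfloor>L / a\<rfloor> + 1" by linarith
    moreover from that have "N + 1 \<le> m" by simp
    then have "real N + 1 \<le> real m" by linarith
    ultimately have "real m > L / a" using rN by linarith
    then have "real m * a > L" using a by (simp add: field_simps)
    then show ?thesis by simp
  qed
  have "(\<Sum>m. indicator {m. real m * a \<le> L} m :: ennreal) = (\<Sum>m\<in>{..N}. indicator {m. real m * a \<le> L} m)"
    by (rule suminf_finite) (auto intro: out)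
  also have "\<dots> \<le> (\<Sum>m\<in>{..N}. 1)"
    by (intro sum_mono) (auto simp: indicator_def)
  also have "\<dots> = ennreal (real N + 1)" by (simp add: ennreal_of_nat_eq_real_of_nat)
  also have "\<dots> \<le> ennreal (L / a + 1)"
  proof (intro ennreal_leI)
    have fl0: "0 \<le> \<lfloor>L / a\<rfloor>" using a L by simp
    have rN: "real N = real_of_int \<lfloor>L / a\<rfloor>" unfolding N_def using fl0 by simp
    show "real N + 1 \<le> L / a + 1" using rN by linarith
  qed
  finally show ?thesis .
qed

lemma BC_En: "AE \<omega> in M. eventually (\<lambda>m. \<bar>En (n - int m) \<omega>\<bar> < (21/20)^m) sequentially"
proof -
  define a where "a = ln (21/20::real)"
  have a: "a > 0" unfolding a_def by simp
  define L where "L \<omega> = log_plus \<bar>En 0 \<omega>\<bar>" for \<omega>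
  have Lm[measurable]: "L \<in> borel_measurable M" unfolding L_def log_plus_def by measurable
  have L0: "L \<omega> \<ge> 0" for \<omega> unfolding L_def log_plus_def by simp
  define B where "B m = {\<omega>\<in>space M. (21/20::real)^m \<le> \<bar>En (n - int m) \<omega>\<bar>}" for m
  define C where "C m = {\<omega>\<in>space M. real m * a \<le> L \<omega>}" for m
  have Bm[measurable]: "B m \<in> sets M" for m unfolding B_def by measurable
  have Cm[measurable]: "C m \<in> sets M" for m unfolding C_def by measurable
  have BC: "measure M (B m) \<le> measure M (C m)" for m
  proof -
    have st: "{x::real. (21/20)^m \<le> \<bar>x\<bar>} \<in> sets borel" by measurable
    have "measure M (B m) = measure M {\<omega>\<in>space M. En (n - int m) \<omega> \<in> {x. (21/20)^m \<le> \<bar>x\<bar>}}"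
      unfolding B_def by simp
    also have "\<dots> = measure M {\<omega>\<in>space M. En 0 \<omega> \<in> {x. (21/20)^m \<le> \<bar>x\<bar>}}"
      by (rule stat_marg[OF A1_stationary En_meas st])
    also have "\<dots> \<le> measure M (C m)"
    proof (rule finite_measure_mono)
      show "{\<omega>\<in>space M. En 0 \<omega> \<in> {x. (21/20)^m \<le> \<bar>x\<bar>}} \<subseteq> C m"
      proof safe
        fix \<omega> assume w: "\<omega> \<in> space M" and le: "(21/20::real)^m \<le> \<bar>En 0 \<omega>\<bar>"
        have "0 < (21/20::real)^m" by simp
        then have pos: "0 < \<bar>En 0 \<omega>\<bar>" using le by linarith
        have "ln ((21/20::real)^m) \<le> ln \<bar>En 0 \<omega>\<bar>" using le pos by simp
        then have "real m * a \<le> ln \<bar>En 0 \<omega>\<bar>" by (simp add: a_def ln_realpow)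
        then show "\<omega> \<in> C m" using w pos by (simp add: C_def L_def log_plus_def)
      qed
    qed (simp add: Cm)
    finally show ?thesis .
  qed
  have "(\<Sum>m. ennreal (measure M (C m))) = (\<Sum>m. \<integral>\<^sup>+\<omega>. indicator (C m) \<omega> \<partial>M)"
    by (simp add: emeasure_eq_measure[symmetric])
  also have "\<dots> = (\<integral>\<^sup>+\<omega>. (\<Sum>m. indicator (C m) \<omega>) \<partial>M)"
    by (rule nn_integral_suminf[symmetric]) simp
  also have "\<dots> \<le> (\<integral>\<^sup>+\<omega>. ennreal (L \<omega> / a + 1) \<partial>M)"
  proof (rule nn_integral_mono)
    fix \<omega> assume w: "\<omega> \<in> space M"
    have "(\<lambda>m. indicator (C m) \<omega> :: ennreal) = (\<lambda>m. indicator {m. real m * a \<le> L \<omega>} m)"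
      using w by (auto simp: C_def indicator_def)
    then show "(\<Sum>m. indicator (C m) \<omega>) \<le> ennreal (L \<omega> / a + 1)"
      using sum_ind_bound[OF a L0[of \<omega>]] by simp
  qed
  also have "\<dots> = (\<integral>\<^sup>+\<omega>. ennreal (L \<omega>) * ennreal (1/a) + 1 \<partial>M)"
  proof (intro nn_integral_cong)
    fix x
    have "ennreal (L x / a + 1) = ennreal (L x / a) + ennreal 1"
      using a L0[of x] by (intro ennreal_plus) auto
    also have "ennreal (L x / a) = ennreal (L x) * ennreal (1/a)"
      using a L0[of x] by (subst ennreal_mult[symmetric]) auto
    finally show "ennreal (L x / a + 1) = ennreal (L x) * ennreal (1/a) + 1" by simp
  qed
  also have "\<dots> = (\<integral>\<^sup>+\<omega>. ennreal (L \<omega>) \<partial>M) * ennreal (1/a) + 1"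
    by (simp add: nn_integral_add nn_integral_multc emeasure_space_1)
  also have "\<dots> < \<top>"
    using A3[of 0] by (simp add: L_def ennreal_mult_less_top)
  finally have "summable (\<lambda>m. measure M (C m))"
    by (intro summable_suminf_not_top) auto
  then have "summable (\<lambda>m. measure M (B m))"
    by (rule summable_comparison_test[rotated]) (use BC in simp)
  then have "AE x in M. eventually (\<lambda>m. x \<in> space M - B m) sequentially"
    by (intro borel_cantelli_AE1) (auto simp: emeasure_eq_measure)
  then show ?thesis
    by (rule eventually_mono) (auto elim!: eventually_mono simp: B_def not_le)
qed

lemma conv: "AE \<omega> in M. \<forall>n. convergent (\<lambda>m. Xm m (shp n (Zp \<omega>)))"
proof (subst AE_all_countable, intro allI)
  fix n
  have "AE \<omega> in M. summable (\<lambda>m. (\<Prod>k<m. \<bar>eps (n - int k) \<omega>\<bar>) * \<bar>En (n - int m) \<omega>\<bar>)"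
    using BC_eps[of n] BC_En[of n]
  proof eventually_elim
    case (elim \<omega>)
    have "eventually (\<lambda>m. norm ((\<Prod>k<m. \<bar>eps (n - int k) \<omega>\<bar>) * \<bar>En (n - int m) \<omega>\<bar>) \<le> (189/200)^m) sequentially"
      using elim(1) elim(2)
    proof eventually_elim
      case (elim m)
      have "(\<Prod>k<m. \<bar>eps (n - int k) \<omega>\<bar>) * \<bar>En (n - int m) \<omega>\<bar> \<le> (9/10)^m * (21/20)^m"
        using elim by (intro mult_mono) (auto simp: prod_nonneg)
      also have "\<dots> = (189/200)^m" by (simp add: power_mult_distrib[symmetric])
      finally show ?case by (simp add: prod_nonneg abs_mult)
    qed
    then show ?case
      by (rule summable_comparison_test_ev) (intro summable_geometric, simp)
  qed
  then show "AE \<omega> in M. convergent (\<lambda>m. Xm m (shp n (Zp \<omega>)))"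
  proof (rule eventually_mono)
    fix \<omega> assume s: "summable (\<lambda>m. (\<Prod>k<m. \<bar>eps (n - int k) \<omega>\<bar>) * \<bar>En (n - int m) \<omega>\<bar>)"
    show "convergent (\<lambda>m. Xm m (shp n (Zp \<omega>)))"
      by (rule Xm_conv) (use s in \<open>simp add: shpZ\<close>)
  qed
qed

lemma Xp_rec: "AE \<omega> in M. \<forall>n. Xp (n + 1) \<omega> = eps (n + 1) \<omega> * \<bar>Xp n \<omega>\<bar> + En (n + 1) \<omega>"
  using conv
proof (rule eventually_mono, intro allI)
  fix \<omega> n assume c: "\<forall>n. convergent (\<lambda>m. Xm m (shp n (Zp \<omega>)))"
  have e: "shp (-1) (shp (n+1) (Zp \<omega>)) = shp n (Zp \<omega>)" by (simp add: shp_shp)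
  have "Fl (shp (n+1) (Zp \<omega>)) = snd (shp (n+1) (Zp \<omega>)) 0 * \<bar>Fl (shp (-1) (shp (n+1) (Zp \<omega>)))\<bar> + fst (shp (n+1) (Zp \<omega>)) 0"
    by (rule Fl_rec) (use c e in simp)
  then show "Xp (n + 1) \<omega> = eps (n + 1) \<omega> * \<bar>Xp n \<omega>\<bar> + En (n + 1) \<omega>"
    unfolding Xp_def e by (simp add: shpZ)
qed

end



lemma contr:
  fixes y x e c :: "int \<Rightarrow> real"
  assumes y: "\<forall>n. y (n+1) = e (n+1) * \<bar>y n\<bar> + c (n+1)"
    and x: "\<forall>n. x (n+1) = e (n+1) * \<bar>x n\<bar> + c (n+1)"
  shows "\<bar>y n - x n\<bar> \<le> (\<Prod>k<m. \<bar>e (n - int k)\<bar>) * \<bar>y (n - int m) - x (n - int m)\<bar>"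
proof (induction m)
  case 0 then show ?case by simp
next
  case (Suc m)
  define j where "j = n - int (Suc m)"
  have jj: "n - int m = j + 1" unfolding j_def by simp
  have "\<bar>y (n - int m) - x (n - int m)\<bar> = \<bar>e (j+1)\<bar> * \<bar>\<bar>y j\<bar> - \<bar>x j\<bar>\<bar>"
  proof -
    have "y (j+1) = e (j+1) * \<bar>y j\<bar> + c (j+1)" "x (j+1) = e (j+1) * \<bar>x j\<bar> + c (j+1)"
      using y x by blast+
    then show ?thesis unfolding jj by (simp add: abs_mult[symmetric] algebra_simps)
  qed
  also have "\<dots> \<le> \<bar>e (j+1)\<bar> * \<bar>y j - x j\<bar>"
    by (intro mult_left_mono abs_triangle_ineq3) simp
  finally have st: "\<bar>y (n - int m) - x (n - int m)\<bar> \<le> \<bar>e (n - int m)\<bar> * \<bar>y j - x j\<bar>"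
    unfolding jj .
  have "\<bar>y n - x n\<bar> \<le> (\<Prod>k<m. \<bar>e (n - int k)\<bar>) * (\<bar>e (n - int m)\<bar> * \<bar>y j - x j\<bar>)"
    using Suc.IH st by (smt (verit, ccfv_SIG) mult_left_mono prod_nonneg abs_ge_zero)
  then show ?case by (simp add: j_def mult.assoc)
qed

lemma (in prob_space) tail0:
  fixes V :: "'a \<Rightarrow> real"
  assumes [measurable]: "V \<in> borel_measurable M"
  shows "(\<lambda>N::nat. measure M {\<omega>\<in>space M. real N < \<bar>V \<omega>\<bar>}) \<longlonglongrightarrow> 0"
proof -
  have "(\<lambda>N::nat. measure M {\<omega>\<in>space M. real N < \<bar>V \<omega>\<bar>}) \<longlonglongrightarrow> measure M (\<Inter>N. {\<omega>\<in>space M. real N < \<bar>V \<omega>\<bar>})"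
    by (rule Lim_measure_decseq) (auto simp: decseq_def)
  also have "(\<Inter>N. {\<omega>\<in>space M. real N < \<bar>V \<omega>\<bar>}) = {}"
  proof safe
    fix \<omega> assume "\<omega> \<in> (\<Inter>N. {\<omega>\<in>space M. real N < \<bar>V \<omega>\<bar>})"
    then have h: "real N < \<bar>V \<omega>\<bar>" for N by blast
    obtain N where "\<bar>V \<omega>\<bar> < real N" using reals_Archimedean2 by blast
    with h[of N] show "\<omega> \<in> {}" by simp
  qed
  finally show ?thesis by simp
qed

lemma (in prob_space) uniq:
  fixes X Y eps En :: "int \<Rightarrow> 'a \<Rightarrow> real"
  assumes Xm[measurable]: "\<And>n. X n \<in> borel_measurable M"
    and Ym[measurable]: "\<And>n. Y n \<in> borel_measurable M"
    and em[measurable]: "\<And>n. eps n \<in> borel_measurable M"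
    and Xr: "AE \<omega> in M. \<forall>n. X (n + 1) \<omega> = eps (n + 1) \<omega> * \<bar>X n \<omega>\<bar> + En (n + 1) \<omega>"
    and Yr: "AE \<omega> in M. \<forall>n. Y (n + 1) \<omega> = eps (n + 1) \<omega> * \<bar>Y n \<omega>\<bar> + En (n + 1) \<omega>"
    and Xs: "stationary_process M X" and Ys: "stationary_process M Y"
    and Ei: "\<And>n m. integrable M (\<lambda>\<omega>. \<Prod>k<m. \<bar>eps (n - int k) \<omega>\<bar>)"
    and Ev: "\<And>n m. (\<integral>\<omega>. (\<Prod>k<m. \<bar>eps (n - int k) \<omega>\<bar>) \<partial>M) = c ^ m"
    and c: "0 \<le> c" "c < 1"
  shows "AE \<omega> in M. \<forall>n. Y n \<omega> = X n \<omega>"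
proof (subst AE_all_countable, intro allI)
  fix n
  define tY where "tY N = measure M {\<omega>\<in>space M. real N < \<bar>Y 0 \<omega>\<bar>}" for N :: nat
  define tX where "tX N = measure M {\<omega>\<in>space M. real N < \<bar>X 0 \<omega>\<bar>}" for N :: nat
  have zero: "measure M {\<omega>\<in>space M. \<delta> < \<bar>Y n \<omega> - X n \<omega>\<bar>} = 0" if \<delta>: "\<delta> > 0" for \<delta>
  proof -
    define S where "S = {\<omega>\<in>space M. \<delta> < \<bar>Y n \<omega> - X n \<omega>\<bar>}"
    have key: "measure M S \<le> c^m * ((2 * real N + 1) / \<delta>) + tY N + tX N" for m N
    proof -
      define D where "D = {\<omega>\<in>space M. \<delta> / (2 * real N + 1) \<le> (\<Prod>k<m. \<bar>eps (n - int k) \<omega>\<bar>)}"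
      define EYs where "EYs = {\<omega>\<in>space M. real N < \<bar>Y (n - int m) \<omega>\<bar>}"
      define EXs where "EXs = {\<omega>\<in>space M. real N < \<bar>X (n - int m) \<omega>\<bar>}"
      have [measurable]: "D \<in> sets M" "EYs \<in> sets M" "EXs \<in> sets M"
        unfolding D_def EYs_def EXs_def by measurable
      have "AE \<omega> in M. \<omega> \<in> S \<longrightarrow> \<omega> \<in> D \<union> EYs \<union> EXs"
        using Xr Yr
      proof eventually_elim
        case (elim \<omega>)
        show ?case
        proof (intro impI)
          assume "\<omega> \<in> S"
          then have w: "\<omega> \<in> space M" and d: "\<delta> < \<bar>Y n \<omega> - X n \<omega>\<bar>" by (auto simp: S_def)
          show "\<omega> \<in> D \<union> EYs \<union> EXs"
          proof (rule ccontr)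
            assume "\<omega> \<notin> D \<union> EYs \<union> EXs"
            then have a1: "(\<Prod>k<m. \<bar>eps (n - int k) \<omega>\<bar>) < \<delta> / (2 * real N + 1)"
              and a2: "\<bar>Y (n - int m) \<omega>\<bar> \<le> real N" and a3: "\<bar>X (n - int m) \<omega>\<bar> \<le> real N"
              using w by (auto simp: D_def EYs_def EXs_def)
            have ct: "\<bar>Y n \<omega> - X n \<omega>\<bar> \<le> (\<Prod>k<m. \<bar>eps (n - int k) \<omega>\<bar>) * \<bar>Y (n - int m) \<omega> - X (n - int m) \<omega>\<bar>"
              using contr[of "\<lambda>i. Y i \<omega>" "\<lambda>i. eps i \<omega>" "\<lambda>i. En i \<omega>" "\<lambda>i. X i \<omega>"] elim by blast
            have "\<bar>Y (n - int m) \<omega> - X (n - int m) \<omega>\<bar> \<le> 2 * real N + 1" using a2 a3 by linarith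
            then have "(\<Prod>k<m. \<bar>eps (n - int k) \<omega>\<bar>) * \<bar>Y (n - int m) \<omega> - X (n - int m) \<omega>\<bar>
                \<le> (\<Prod>k<m. \<bar>eps (n - int k) \<omega>\<bar>) * (2 * real N + 1)"
              by (intro mult_left_mono) (auto simp: prod_nonneg)
            also have "\<dots> < \<delta>" using a1 by (simp add: field_simps)
            finally show False using ct d by linarith
          qed
        qed
      qed
      then have "measure M S \<le> measure M (D \<union> EYs \<union> EXs)"
        by (rule finite_measure_mono_AE) simp
      also have "\<dots> \<le> measure M D + measure M EYs + measure M EXs"
        by (smt (verit) measure_Un_le sets.Un \<open>D \<in> sets M\<close> \<open>EYs \<in> sets M\<close> \<open>EXs \<in> sets M\<close>)
      also have "measure M D \<le> c^m * ((2 * real N + 1) / \<delta>)"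
      proof -
        have "measure M D \<le> (\<integral>\<omega>. (\<Prod>k<m. \<bar>eps (n - int k) \<omega>\<bar>) \<partial>M) / (\<delta> / (2 * real N + 1))"
          unfolding D_def
          by (rule integral_Markov_inequality_measure[OF Ei]) (auto simp: prod_nonneg \<delta>)
        then show ?thesis by (simp add: Ev)
      qed
      also have "measure M EYs = tY N"
        using stat_marg[OF Ys Ym, of "{x. real N < \<bar>x\<bar>}" "n - int m" 0]
        unfolding EYs_def tY_def by simp
      also have "measure M EXs = tX N"
        using stat_marg[OF Xs Xm, of "{x. real N < \<bar>x\<bar>}" "n - int m" 0]
        unfolding EXs_def tX_def by simp
      finally show ?thesis by simp
    qed
    have le1: "measure M S \<le> tY N + tX N" for N
    proof (rule tendsto_le[OF trivial_limit_sequentially _ tendsto_const])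
      have "(\<lambda>m. c^m * ((2 * real N + 1) / \<delta>) + tY N + tX N) \<longlonglongrightarrow> 0 * ((2 * real N + 1) / \<delta>) + tY N + tX N"
        using c by (intro tendsto_intros LIMSEQ_power_zero) auto
      then show "(\<lambda>m. c^m * ((2 * real N + 1) / \<delta>) + tY N + tX N) \<longlonglongrightarrow> tY N + tX N" by simp
      show "\<forall>\<^sub>F m in sequentially. measure M S \<le> c^m * ((2 * real N + 1) / \<delta>) + tY N + tX N"
        using key by simp
    qed
    have "measure M S \<le> 0"
    proof (rule tendsto_le[OF trivial_limit_sequentially _ tendsto_const])
      have "(\<lambda>N. tY N + tX N) \<longlonglongrightarrow> 0 + 0"
        unfolding tY_def tX_def by (intro tendsto_add tail0) auto
      then show "(\<lambda>N. tY N + tX N) \<longlonglongrightarrow> 0" by simp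
      show "\<forall>\<^sub>F N in sequentially. measure M S \<le> tY N + tX N" using le1 by simp
    qed
    then show ?thesis unfolding S_def by (simp add: measure_le_0_iff)
  qed
  have "AE \<omega> in M. \<forall>j::nat. \<bar>Y n \<omega> - X n \<omega>\<bar> \<le> 1 / real (Suc j)"
  proof (subst AE_all_countable, intro allI)
    fix j :: nat
    have S: "{\<omega>\<in>space M. 1 / real (Suc j) < \<bar>Y n \<omega> - X n \<omega>\<bar>} \<in> null_sets M"
      using zero[of "1 / real (Suc j)"] by (auto simp: null_sets_def emeasure_eq_measure)
    show "AE \<omega> in M. \<bar>Y n \<omega> - X n \<omega>\<bar> \<le> 1 / real (Suc j)"
      by (rule AE_I'[OF S]) auto
  qed
  then show "AE \<omega> in M. Y n \<omega> = X n \<omega>"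
  proof (rule eventually_mono)
    fix \<omega> assume a: "\<forall>j::nat. \<bar>Y n \<omega> - X n \<omega>\<bar> \<le> 1 / real (Suc j)"
    show "Y n \<omega> = X n \<omega>"
    proof (rule ccontr)
      assume "Y n \<omega> \<noteq> X n \<omega>"
      then have "0 < \<bar>Y n \<omega> - X n \<omega>\<bar>" by simp
      then obtain j where "inverse (real (Suc j)) < \<bar>Y n \<omega> - X n \<omega>\<bar>"
        using reals_Archimedean by blast
      then show False using a[rule_format, of j] by (simp add: inverse_eq_divide)
    qed
  qed
qed


theorem theorem3:
  fixes M :: "'a measure"
    and eps :: "int \<Rightarrow> 'a \<Rightarrow> real"
    and En :: "int \<Rightarrow> 'a \<Rightarrow> real"
  assumes "prob_space M"
    and eps_indep: "prob_space.indep_vars M (\<lambda>_. borel) eps UNIV"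
    and eps_normal: "\<And>i. distributed M lborel (eps i) (\<lambda>x. ennreal (std_normal_density x))"
    and En_meas: "\<And>i. En i \<in> borel_measurable M"
    and A1_stationary: "stationary_process M En"
    and A1_ergodic: "ergodic_process M En"
    and A2: "prob_space.indep_var M
               (PiM UNIV (\<lambda>_. borel)) (\<lambda>\<omega> i. En i \<omega>)
               (PiM UNIV (\<lambda>_. borel)) (\<lambda>\<omega> i. eps i \<omega>)"
    and A3: "\<And>i. (\<integral>\<^sup>+ \<omega>. ennreal (log_plus \<bar>En i \<omega>\<bar>) \<partial>M) < \<infinity>"
  shows "\<exists>X :: int \<Rightarrow> 'a \<Rightarrow> real.
           (\<forall>n. X n \<in> borel_measurable M) \<and>
           (AE \<omega> in M. \<forall>n. X (n + 1) \<omega> = eps (n + 1) \<omega> * \<bar>X n \<omega>\<bar> + En (n + 1) \<omega>) \<and>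
           stationary_process M X \<and>
           (\<forall>Y :: int \<Rightarrow> 'a \<Rightarrow> real.
              (\<forall>n. Y n \<in> borel_measurable M) \<and>
              (AE \<omega> in M. \<forall>n. Y (n + 1) \<omega> = eps (n + 1) \<omega> * \<bar>Y n \<omega>\<bar> + En (n + 1) \<omega>) \<and>
              stationary_process M Y
              \<longrightarrow> (AE \<omega> in M. \<forall>n. Y n \<omega> = X n \<omega>))"
  proof -
  have cl: "cloud M eps En"
    unfolding cloud_def cloud_axioms_def using assms by auto
  interpret cloud M eps En by (rule cl)
  have c: "0 \<le> sqrt (2/pi)" "sqrt (2/pi) < 1" using c_lt pi_gt_zero pi_gt3 by (simp_all add: less_imp_le)
  show ?thesis
  proof (intro exI[of _ Xp] conjI allI impI)
    show "Xp n \<in> borel_measurable M" for n by simp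
    show "AE \<omega> in M. \<forall>n. Xp (n + 1) \<omega> = eps (n + 1) \<omega> * \<bar>Xp n \<omega>\<bar> + En (n + 1) \<omega>"
      by (rule Xp_rec)
    show "stationary_process M Xp" by (rule Xp_stat)
    fix Y :: "int \<Rightarrow> 'a \<Rightarrow> real"
    assume Y: "(\<forall>n. Y n \<in> borel_measurable M) \<and>
              (AE \<omega> in M. \<forall>n. Y (n + 1) \<omega> = eps (n + 1) \<omega> * \<bar>Y n \<omega>\<bar> + En (n + 1) \<omega>) \<and>
              stationary_process M Y"
    show "AE \<omega> in M. \<forall>n. Y n \<omega> = Xp n \<omega>"
      using Y by (intro uniq[OF Xp_meas _ eps_meas Xp_rec _ Xp_stat _ E_prod(1) E_prod(2) c]) auto
  qed
qed

end
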